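(* Let $a\ge2$ be an integer and $G=\langle x,y\mid x^a=y^a\rangle$, which is a Garside group with Garside element $\Delta=x^a=y^a$ (central). Then (i) $x$ and $y$ are not conjugate in $G$ (although $x^a=y^a$ and both are periodic); (ii) there is no Garside structure on $G$ in which $x$ is a Garside element.
   Context: A Garside structure on a group $G$ is a triple $(G,G^+,\Delta)$ where $G$ is the group of fractions of a Garside monoid $G^+$ (an atomic, left and right cancellative monoid that is a lattice under both the prefix order and the suffix order) and $\Delta\in G^+$ is an element whose left and right divisors in $G^+$ coincide, form a finite set, and generate $G^+$; $\Delta$ is then called a Garside element. An element $g$ is periodic with respect to $\Delta$ if $g=1$ or $g^k$ is conjugate to $\Delta^\ell$ for some nonzero integers $k,\ell$. *)

theory Defs
  imports "HOL-Algebra.Algebra"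
begin

text \<open>Letters of words in the free group on x, y: the first component selects
the generator (False = x, True = y), the second says whether the letter is
the inverse of that generator.\<close>

type_synonym letter = "bool \<times> bool"

definition inv_letter :: "letter \<Rightarrow> letter" where
  "inv_letter l = (fst l, \<not> snd l)"

inductive_set pres_rel :: "nat \<Rightarrow> (letter list \<times> letter list) set" for a :: nat where
  refl: "(w, w) \<in> pres_rel a"
| sym: "(u, v) \<in> pres_rel a \<Longrightarrow> (v, u) \<in> pres_rel a"
| trans: "(u, v) \<in> pres_rel a \<Longrightarrow> (v, w) \<in> pres_rel a \<Longrightarrow> (u, w) \<in> pres_rel a"
| ctx: "(u, v) \<in> pres_rel a \<Longrightarrow> (p @ u @ q, p @ v @ q) \<in> pres_rel a"
| cancel: "([l, inv_letter l], []) \<in> pres_rel a"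
| relator: "(replicate a (False, False), replicate a (True, False)) \<in> pres_rel a"

definition xy_group :: "nat \<Rightarrow> letter list set monoid" where
  "xy_group a = \<lparr> partial_object.carrier = UNIV // pres_rel a,
     monoid.mult = (\<lambda>A B. pres_rel a `` {(SOME u. u \<in> A) @ (SOME v. v \<in> B)}),
     monoid.one = pres_rel a `` {[]} \<rparr>"

definition gen_x :: "nat \<Rightarrow> letter list set" where
  "gen_x a = pres_rel a `` {[(False, False)]}"

definition gen_y :: "nat \<Rightarrow> letter list set" where
  "gen_y a = pres_rel a `` {[(True, False)]}"

definition left_divides :: "('a, 'b) monoid_scheme \<Rightarrow> 'a set \<Rightarrow> 'a \<Rightarrow> 'a \<Rightarrow> bool" where
  "left_divides G M u v \<longleftrightarrow> u \<in> M \<and> v \<in> M \<and> (\<exists>c\<in>M. u \<otimes>\<^bsub>G\<^esub> c = v)"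

definition right_divides :: "('a, 'b) monoid_scheme \<Rightarrow> 'a set \<Rightarrow> 'a \<Rightarrow> 'a \<Rightarrow> bool" where
  "right_divides G M u v \<longleftrightarrow> u \<in> M \<and> v \<in> M \<and> (\<exists>c\<in>M. c \<otimes>\<^bsub>G\<^esub> u = v)"

definition is_lattice_on :: "'a set \<Rightarrow> ('a \<Rightarrow> 'a \<Rightarrow> bool) \<Rightarrow> bool" where
  "is_lattice_on M rel \<longleftrightarrow>
     (\<forall>u\<in>M. rel u u) \<and>
     (\<forall>u\<in>M. \<forall>v\<in>M. \<forall>w\<in>M. rel u v \<and> rel v w \<longrightarrow> rel u w) \<and>
     (\<forall>u\<in>M. \<forall>v\<in>M. rel u v \<and> rel v u \<longrightarrow> u = v) \<and>
     (\<forall>u\<in>M. \<forall>v\<in>M.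
        (\<exists>j\<in>M. rel u j \<and> rel v j \<and> (\<forall>z\<in>M. rel u z \<and> rel v z \<longrightarrow> rel j z)) \<and>
        (\<exists>m\<in>M. rel m u \<and> rel m v \<and> (\<forall>z\<in>M. rel z u \<and> rel z v \<longrightarrow> rel z m)))"

definition atomic_monoid :: "('a, 'b) monoid_scheme \<Rightarrow> 'a set \<Rightarrow> bool" where
  "atomic_monoid G M \<longleftrightarrow>
     (\<forall>m\<in>M. \<exists>N::nat. \<forall>xs. set xs \<subseteq> M - {\<one>\<^bsub>G\<^esub>} \<and>
        foldr (\<otimes>\<^bsub>G\<^esub>) xs \<one>\<^bsub>G\<^esub> = m \<longrightarrow> length xs \<le> N)"

definition cancellative_monoid :: "('a, 'b) monoid_scheme \<Rightarrow> 'a set \<Rightarrow> bool" where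
  "cancellative_monoid G M \<longleftrightarrow>
     (\<forall>u\<in>M. \<forall>v\<in>M. \<forall>w\<in>M. u \<otimes>\<^bsub>G\<^esub> v = u \<otimes>\<^bsub>G\<^esub> w \<longrightarrow> v = w) \<and>
     (\<forall>u\<in>M. \<forall>v\<in>M. \<forall>w\<in>M. v \<otimes>\<^bsub>G\<^esub> u = w \<otimes>\<^bsub>G\<^esub> u \<longrightarrow> v = w)"

definition garside_monoid :: "('a, 'b) monoid_scheme \<Rightarrow> 'a set \<Rightarrow> bool" where
  "garside_monoid G M \<longleftrightarrow>
     M \<subseteq> carrier G \<and> \<one>\<^bsub>G\<^esub> \<in> M \<and>
     (\<forall>u\<in>M. \<forall>v\<in>M. u \<otimes>\<^bsub>G\<^esub> v \<in> M) \<and>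
     atomic_monoid G M \<and> cancellative_monoid G M \<and>
     is_lattice_on M (left_divides G M) \<and> is_lattice_on M (right_divides G M)"

definition garside_element :: "('a, 'b) monoid_scheme \<Rightarrow> 'a set \<Rightarrow> 'a \<Rightarrow> bool" where
  "garside_element G M D \<longleftrightarrow>
     D \<in> M \<and>
     {u. left_divides G M u D} = {u. right_divides G M u D} \<and>
     finite {u. left_divides G M u D} \<and>
     (\<forall>m\<in>M. \<exists>ds. set ds \<subseteq> {u. left_divides G M u D} \<and> foldr (\<otimes>\<^bsub>G\<^esub>) ds \<one>\<^bsub>G\<^esub> = m)"

text \<open>(G, M, D) is a Garside structure on G: M is a Garside submonoid of G
which generates G as a group (so that G is the group of fractions of M),
and D is a Garside element of M.\<close>

definition garside_structure :: "('a, 'b) monoid_scheme \<Rightarrow> 'a set \<Rightarrow> 'a \<Rightarrow> bool" where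
  "garside_structure G M D \<longleftrightarrow>
     garside_monoid G M \<and> generate G M = carrier G \<and> garside_element G M D"

end

theory Submission
  imports Defs
begin


abbreviation R :: "nat \<Rightarrow> (letter list \<times> letter list) set" where "R a \<equiv> pres_rel a"

lemma pr_equiv: "equiv UNIV (pres_rel a)"
proof -
  have "refl_on UNIV (pres_rel a)" by (simp add: refl_on_def pres_rel.refl)
  moreover have "sym (pres_rel a)" unfolding sym_def using pres_rel.sym by blast
  moreover have "trans (pres_rel a)" unfolding trans_def using pres_rel.trans by blast
  ultimately show ?thesis by (simp add: equiv_def)
qed

lemma pr_cong: assumes h1: "(u,u')\<in>pres_rel a" and h2: "(v,v')\<in>pres_rel a"
  shows "(u@v, u'@v')\<in>pres_rel a"
proof -
  have "([]@u@v, []@u'@v) \<in> pres_rel a" by (rule pres_rel.ctx[OF h1])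
  moreover have "(u'@v@[], u'@v'@[]) \<in> pres_rel a" by (rule pres_rel.ctx[OF h2])
  ultimately show ?thesis by (auto intro: pres_rel.trans)
qed

lemma class_eq: "(pres_rel a``{u} = pres_rel a``{v}) = ((u,v) \<in> pres_rel a)"
  using eq_equiv_class_iff[OF pr_equiv] by blast

lemma some_in: "(u, SOME w. w \<in> pres_rel a``{u}) \<in> pres_rel a"
proof -
  have "(SOME w. w \<in> pres_rel a``{u}) \<in> pres_rel a``{u}"
    by (rule someI[of _ u]) (auto intro: pres_rel.refl)
  thus ?thesis by simp
qed

lemma xy_mult: "pres_rel a``{u} \<otimes>\<^bsub>xy_group a\<^esub> pres_rel a``{v} = pres_rel a``{u@v}"
proof -
  have "((SOME w. w \<in> pres_rel a``{u}) @ (SOME w. w \<in> pres_rel a``{v}), u@v) \<in> pres_rel a"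
    by (rule pres_rel.sym, rule pr_cong[OF some_in some_in])
  thus ?thesis unfolding xy_group_def by (simp add: class_eq)
qed

lemma xy_one: "\<one>\<^bsub>xy_group a\<^esub> = pres_rel a``{[]}" by (simp add: xy_group_def)

lemma xy_carrier_E: "A \<in> carrier (xy_group a) \<Longrightarrow> \<exists>w. A = pres_rel a``{w}"
  unfolding xy_group_def by (auto elim: quotientE)

lemma xy_carrier_I: "pres_rel a``{w} \<in> carrier (xy_group a)"
  unfolding xy_group_def by (auto intro: quotientI)

definition winv :: "letter list \<Rightarrow> letter list" where
  "winv w = rev (map inv_letter w)"

lemma inv_inv_letter[simp]: "inv_letter (inv_letter l) = l"
  by (simp add: inv_letter_def)

lemma winv_l: "(winv w @ w, []) \<in> pres_rel a"
proof (induction w)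
  case Nil then show ?case by (simp add: winv_def pres_rel.refl)
next
  case (Cons l w)
  have "winv (l#w) @ l # w = winv w @ [inv_letter l, inv_letter (inv_letter l)] @ w"
    by (simp add: winv_def)
  moreover have "(winv w @ [inv_letter l, inv_letter (inv_letter l)] @ w, winv w @ [] @ w) \<in> pres_rel a"
    by (rule pres_rel.ctx, rule pres_rel.cancel)
  ultimately show ?case using Cons by (auto intro: pres_rel.trans)
qed

lemma xy_group: "group (xy_group a)"
proof (rule groupI)
  fix A B assume "A \<in> carrier (xy_group a)" "B \<in> carrier (xy_group a)"
  then obtain u v where "A = pres_rel a``{u}" "B = pres_rel a``{v}" using xy_carrier_E by blast
  then show "A \<otimes>\<^bsub>xy_group a\<^esub> B \<in> carrier (xy_group a)" by (simp add: xy_mult xy_carrier_I)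
next
  show "\<one>\<^bsub>xy_group a\<^esub> \<in> carrier (xy_group a)" by (simp add: xy_one xy_carrier_I)
next
  fix A B C assume "A \<in> carrier (xy_group a)" "B \<in> carrier (xy_group a)" "C \<in> carrier (xy_group a)"
  then obtain u v w where "A = pres_rel a``{u}" "B = pres_rel a``{v}" "C = pres_rel a``{w}" using xy_carrier_E by blast
  then show "A \<otimes>\<^bsub>xy_group a\<^esub> B \<otimes>\<^bsub>xy_group a\<^esub> C = A \<otimes>\<^bsub>xy_group a\<^esub> (B \<otimes>\<^bsub>xy_group a\<^esub> C)"
    by (simp add: xy_mult)
next
  fix A assume "A \<in> carrier (xy_group a)"
  then obtain u where "A = pres_rel a``{u}" using xy_carrier_E by blast
  then show "\<one>\<^bsub>xy_group a\<^esub> \<otimes>\<^bsub>xy_group a\<^esub> A = A" by (simp add: xy_mult xy_one)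
next
  fix A assume "A \<in> carrier (xy_group a)"
  then obtain u where u: "A = pres_rel a``{u}" using xy_carrier_E by blast
  show "\<exists>B\<in>carrier (xy_group a). B \<otimes>\<^bsub>xy_group a\<^esub> A = \<one>\<^bsub>xy_group a\<^esub>"
    by (rule bexI[of _ "pres_rel a``{winv u}"])
       (simp_all add: u xy_mult xy_one xy_carrier_I class_eq winv_l)
qed

lemma xy_pow: "pres_rel a``{[l]} [^]\<^bsub>xy_group a\<^esub> (n::nat) = pres_rel a``{replicate n l}"
proof (induction n)
  case 0 then show ?case by (simp add: xy_one)
next
  case (Suc n)
  have "pres_rel a``{[l]} [^]\<^bsub>xy_group a\<^esub> Suc n = pres_rel a``{replicate n l} \<otimes>\<^bsub>xy_group a\<^esub> pres_rel a``{[l]}"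
    using Suc by simp
  also have "\<dots> = pres_rel a``{replicate (Suc n) l}" by (simp add: xy_mult replicate_append_same)
  finally show ?case .
qed

lemma letter_comm:
  assumes "fst l = b"
  shows "(replicate (Suc n) (b,False) @ [l], l # replicate (Suc n) (b,False)) \<in> pres_rel a"
proof (cases "snd l")
  case False
  then have "l = (b,False)" using assms by (cases l) auto
  then show ?thesis using replicate_append_same[of "Suc n" "(b,False)"] pres_rel.refl by metis
next
  case True
  then have l: "l = inv_letter (b,False)" using assms by (cases l) (auto simp: inv_letter_def)
  have 1: "(replicate n (b,False) @ [(b,False), inv_letter (b,False)] @ [], replicate n (b,False) @ [] @ []) \<in> pres_rel a"
    by (rule pres_rel.ctx, rule pres_rel.cancel)
  have 2: "([] @ [l, inv_letter l] @ replicate n (b,False), [] @ [] @ replicate n (b,False)) \<in> pres_rel a"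
    by (rule pres_rel.ctx, rule pres_rel.cancel)
  have e1: "replicate (Suc n) (b,False) @ [l] = replicate n (b,False) @ [(b,False), inv_letter (b,False)] @ []"
  proof -
    have "replicate (Suc n) (b,False) = replicate n (b,False) @ [(b,False)]" by (induct n) auto
    then show ?thesis by (simp add: l)
  qed
  have e2: "l # replicate (Suc n) (b,False) = [] @ [l, inv_letter l] @ replicate n (b,False)"
    by (simp add: l)
  show ?thesis unfolding e1 e2 using 1 2 by (auto intro: pres_rel.trans pres_rel.sym)
qed

lemma xa_comm_letter:
  assumes "a \<ge> 1"
  shows "(replicate a (False,False) @ [l], l # replicate a (False,False)) \<in> pres_rel a"
proof -
  obtain n where a: "a = Suc n" using assms by (cases a) auto
  show ?thesis
  proof (cases "fst l")
    case False then show ?thesis using letter_comm[of l False n a] a by simp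
  next
    case True
    have r: "(replicate a (False,False), replicate a (True,False)) \<in> pres_rel a" by (rule pres_rel.relator)
    have "(replicate a (False,False) @ [l], replicate a (True,False) @ [l]) \<in> pres_rel a"
      using pr_cong[OF r pres_rel.refl] .
    moreover have "(replicate a (True,False) @ [l], l # replicate a (True,False)) \<in> pres_rel a"
      using letter_comm[of l True n a] a True by simp
    moreover have "(l # replicate a (True,False), l # replicate a (False,False)) \<in> pres_rel a"
      using pr_cong[OF pres_rel.refl[of "[l]"] pres_rel.sym[OF r]] by simp
    ultimately show ?thesis by (auto intro: pres_rel.trans)
  qed
qed

lemma xa_comm:
  assumes "a \<ge> 1"
  shows "(replicate a (False,False) @ w, w @ replicate a (False,False)) \<in> pres_rel a"
proof (induction w)
  case Nil then show ?case by (simp add: pres_rel.refl)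
next
  case (Cons l w)
  have "(replicate a (False,False) @ [l] @ w, (l # replicate a (False,False)) @ w) \<in> pres_rel a"
    using pr_cong[OF xa_comm_letter[OF assms] pres_rel.refl] by simp
  moreover have "([l] @ replicate a (False,False) @ w, [l] @ w @ replicate a (False,False)) \<in> pres_rel a"
    using pr_cong[OF pres_rel.refl Cons] .
  ultimately show ?case by (auto intro: pres_rel.trans)
qed



definition lval :: "letter \<Rightarrow> int" where
  "lval l = (if fst l then 0 else if snd l then -1 else 1)"

definition cnt :: "letter list \<Rightarrow> int" where
  "cnt w = sum_list (map lval w)"

lemma cnt_append[simp]: "cnt (u @ v) = cnt u + cnt v" by (simp add: cnt_def)

lemma cnt_inv: "(u,v) \<in> pres_rel a \<Longrightarrow> cnt u mod int a = cnt v mod int a"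
proof (induction rule: pres_rel.induct)
  case (ctx u v p q)
  then show ?case by (simp only: cnt_append) (rule mod_add_cong[OF HOL.refl mod_add_cong[OF ctx.IH HOL.refl]])
next
  case (cancel l) then show ?case by (simp add: cnt_def lval_def inv_letter_def)
next
  case relator then show ?case by (simp add: cnt_def lval_def sum_list_replicate)
qed auto

definition Phi :: "nat \<Rightarrow> letter list set \<Rightarrow> int" where
  "Phi a A = cnt (SOME w. w \<in> A) mod int a"

lemma Phi_class: "Phi a (pres_rel a``{u}) = cnt u mod int a"
  unfolding Phi_def using cnt_inv[OF some_in] by simp

lemma Phi_mult: assumes "A \<in> carrier (xy_group a)" "B \<in> carrier (xy_group a)"
  shows "Phi a (A \<otimes>\<^bsub>xy_group a\<^esub> B) = (Phi a A + Phi a B) mod int a"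
proof -
  obtain u v where "A = pres_rel a``{u}" "B = pres_rel a``{v}" using assms xy_carrier_E by blast
  then show ?thesis by (simp add: xy_mult Phi_class mod_add_eq)
qed

lemma part1:
  assumes "a \<ge> 2"
  shows "\<not> (\<exists>g \<in> carrier (xy_group a).
             g \<otimes>\<^bsub>xy_group a\<^esub> gen_x a \<otimes>\<^bsub>xy_group a\<^esub> inv\<^bsub>xy_group a\<^esub> g = gen_y a)"
proof
  assume "\<exists>g \<in> carrier (xy_group a).
             g \<otimes>\<^bsub>xy_group a\<^esub> gen_x a \<otimes>\<^bsub>xy_group a\<^esub> inv\<^bsub>xy_group a\<^esub> g = gen_y a"
  then obtain g where g: "g \<in> carrier (xy_group a)"
    and e: "g \<otimes>\<^bsub>xy_group a\<^esub> gen_x a \<otimes>\<^bsub>xy_group a\<^esub> inv\<^bsub>xy_group a\<^esub> g = gen_y a" by blast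
  interpret group "xy_group a" by (rule xy_group)
  have xc: "gen_x a \<in> carrier (xy_group a)" unfolding gen_x_def by (rule xy_carrier_I)
  have ic: "inv\<^bsub>xy_group a\<^esub> g \<in> carrier (xy_group a)" using g by simp
  have "Phi a (g \<otimes>\<^bsub>xy_group a\<^esub> inv\<^bsub>xy_group a\<^esub> g) = 0"
    using g by (simp add: xy_one Phi_class cnt_def)
  then have h0: "(Phi a g + Phi a (inv\<^bsub>xy_group a\<^esub> g)) mod int a = 0" using Phi_mult[OF g ic] by simp
  have "Phi a (gen_y a) = 0" unfolding gen_y_def by (simp add: Phi_class cnt_def lval_def)
  moreover have "Phi a (g \<otimes>\<^bsub>xy_group a\<^esub> gen_x a \<otimes>\<^bsub>xy_group a\<^esub> inv\<^bsub>xy_group a\<^esub> g)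
     = ((Phi a g + 1) mod int a + Phi a (inv\<^bsub>xy_group a\<^esub> g)) mod int a"
    using Phi_mult[OF g xc] Phi_mult[OF m_closed[OF g xc] ic] 
    by (simp add: gen_x_def Phi_class cnt_def lval_def mod_add_right_eq)
  moreover have "((Phi a g + 1) mod int a + Phi a (inv\<^bsub>xy_group a\<^esub> g)) mod int a = 1"
  proof -
    have "((Phi a g + 1) mod int a + Phi a (inv\<^bsub>xy_group a\<^esub> g)) mod int a
       = ((Phi a g + Phi a (inv\<^bsub>xy_group a\<^esub> g)) mod int a + 1) mod int a"
    proof -
      have "((Phi a g + 1) mod int a + Phi a (inv\<^bsub>xy_group a\<^esub> g)) mod int a = (Phi a g + 1 + Phi a (inv\<^bsub>xy_group a\<^esub> g)) mod int a"
        by (rule mod_add_left_eq)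
      moreover have "((Phi a g + Phi a (inv\<^bsub>xy_group a\<^esub> g)) mod int a + 1) mod int a = (Phi a g + Phi a (inv\<^bsub>xy_group a\<^esub> g) + 1) mod int a"
        by (rule mod_add_left_eq)
      ultimately show ?thesis by (simp add: ac_simps)
    qed
    also have "\<dots> = 1" using h0 assms by simp
    finally show ?thesis .
  qed
  ultimately show False using e by simp
qed



locale gar = group G for G (structure) +
  fixes M and x and a :: nat
  assumes gs: "garside_structure G M x" and a1: "1 \<le> a"
    and cen: "\<And>g. g \<in> carrier G \<Longrightarrow> x [^] a \<otimes> g = g \<otimes> x [^] a"
begin

lemma Msub: "M \<subseteq> carrier G" using gs unfolding garside_structure_def garside_monoid_def by blast
lemma Mc[simp]: "u \<in> M \<Longrightarrow> u \<in> carrier G" using Msub by blast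
lemma oneM[simp]: "\<one> \<in> M" using gs unfolding garside_structure_def garside_monoid_def by blast
lemma multM[simp]: "u \<in> M \<Longrightarrow> v \<in> M \<Longrightarrow> u \<otimes> v \<in> M"
  using gs unfolding garside_structure_def garside_monoid_def by blast
lemma xM[simp]: "x \<in> M" using gs unfolding garside_structure_def garside_element_def by blast
lemma xc[simp]: "x \<in> carrier G" by simp

lemma lc[simp]: "a' \<in> carrier G \<Longrightarrow> b \<in> carrier G \<Longrightarrow> inv a' \<otimes> (a' \<otimes> b) = b"
  by (simp add: m_assoc[symmetric])
lemma rc[simp]: "a' \<in> carrier G \<Longrightarrow> b \<in> carrier G \<Longrightarrow> a' \<otimes> (inv a' \<otimes> b) = b"
  by (simp add: m_assoc[symmetric])

lemma foldr_rep: "u \<in> carrier G \<Longrightarrow> v \<in> carrier G \<Longrightarrow> u \<otimes> v = \<one> \<Longrightarrow>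
   foldr (\<otimes>) (concat (replicate n [u,v])) \<one> = \<one>"
  by (induct n) (auto simp: m_assoc[symmetric])

lemma unit: assumes u: "u \<in> M" and v: "v \<in> M" and uv: "u \<otimes> v = \<one>" shows "u = \<one>"
proof (rule ccontr)
  assume nu: "u \<noteq> \<one>"
  have nv: "v \<noteq> \<one>" using uv nu u by auto
  have "atomic_monoid G M" using gs unfolding garside_structure_def garside_monoid_def by blast
  then obtain N where N: "\<forall>xs. set xs \<subseteq> M - {\<one>} \<and> foldr (\<otimes>) xs \<one> = \<one> \<longrightarrow> length xs \<le> N"
    unfolding atomic_monoid_def using oneM by blast
  let ?xs = "concat (replicate (Suc N) [u,v])"
  have "set ?xs \<subseteq> M - {\<one>}" using u v nu nv by auto
  moreover have "foldr (\<otimes>) ?xs \<one> = \<one>" using foldr_rep u v uv by simp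
  moreover have "length ?xs = 2 * Suc N" by (simp add: length_concat sum_list_replicate)
  ultimately show False using N by fastforce
qed

lemma ld_iff: assumes "u \<in> M" "v \<in> M" shows "left_divides G M u v \<longleftrightarrow> inv u \<otimes> v \<in> M"
proof
  assume "left_divides G M u v" then obtain c where "c \<in> M" "u \<otimes> c = v" unfolding left_divides_def by blast
  then show "inv u \<otimes> v \<in> M" using assms by auto
next
  assume h: "inv u \<otimes> v \<in> M"
  have "u \<otimes> (inv u \<otimes> v) = v" using assms by simp
  then show "left_divides G M u v" unfolding left_divides_def using assms h by blast
qed

lemma foldrM: "set ds \<subseteq> M \<Longrightarrow> foldr (\<otimes>) ds \<one> \<in> M"
  by (induct ds) auto

lemma gen_elem: "m \<in> M \<Longrightarrow> \<exists>ds. set ds \<subseteq> {u. left_divides G M u x} \<and> foldr (\<otimes>) ds \<one> = m"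
  using gs unfolding garside_structure_def garside_element_def by blast

lemma divsM: "set ds \<subseteq> {u. left_divides G M u x} \<Longrightarrow> set ds \<subseteq> M"
  unfolding left_divides_def by blast

lemma sigD: assumes "left_divides G M d x" shows "inv x \<otimes> d \<otimes> x \<in> M"
proof -
  obtain c where d: "d \<in> M" and c: "c \<in> M" and dc: "d \<otimes> c = x" using assms unfolding left_divides_def by blast
  have "right_divides G M c x" unfolding right_divides_def using c d dc by auto
  moreover have "{u. left_divides G M u x} = {u. right_divides G M u x}"
    using gs unfolding garside_structure_def garside_element_def by blast
  ultimately have "left_divides G M c x" by blast
  then obtain e where e: "e \<in> M" and ce: "c \<otimes> e = x" unfolding left_divides_def by blast
  have "d \<otimes> x = x \<otimes> e" using dc ce d c e by (metis Mc m_assoc)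
  then have "inv x \<otimes> d \<otimes> x = e" using d e by (simp add: m_assoc)
  then show ?thesis using e by simp
qed

lemma sigM: assumes "m \<in> M" shows "inv x \<otimes> m \<otimes> x \<in> M"
proof -
  obtain ds where ds: "set ds \<subseteq> {u. left_divides G M u x}" and m: "foldr (\<otimes>) ds \<one> = m"
    using gen_elem assms by blast
  have "inv x \<otimes> foldr (\<otimes>) ds \<one> \<otimes> x \<in> M" using ds
  proof (induct ds)
    case Nil then show ?case by simp
  next
    case (Cons d ds)
    have dM: "d \<in> M" using Cons.prems unfolding left_divides_def by auto
    have fM: "foldr (\<otimes>) ds \<one> \<in> M" using foldrM divsM Cons.prems by simp
    have "inv x \<otimes> foldr (\<otimes>) (d#ds) \<one> \<otimes> x
       = (inv x \<otimes> d \<otimes> x) \<otimes> (inv x \<otimes> foldr (\<otimes>) ds \<one> \<otimes> x)"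
      using dM fM by (simp add: m_assoc)
    also have "\<dots> \<in> M" using Cons sigD[of d] by simp
    finally show ?case .
  qed
  then show ?thesis using m by simp
qed

definition E :: "nat \<Rightarrow> 'a" where "E k = (x [^] a) [^] k"

lemma Ec[simp]: "E k \<in> carrier G" by (simp add: E_def)
lemma xpowM[simp]: "x [^] (n::nat) \<in> M" by (induct n) auto
lemma EM[simp]: "E k \<in> M" by (simp add: E_def nat_pow_pow)
lemma E_add: "E (j + k) = E j \<otimes> E k" by (simp add: E_def nat_pow_mult)
lemma E0[simp]: "E 0 = \<one>" by (simp add: E_def)
lemma E1: "E 1 = x [^] a" by (simp add: E_def)
lemma Ecen: "g \<in> carrier G \<Longrightarrow> E k \<otimes> g = g \<otimes> E k"
proof (induct k)
  case 0 then show ?case by simp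
next
  case (Suc k)
  have "E (Suc k) = E k \<otimes> x [^] a" using E_add[of k 1] E1 by simp
  then show ?case using Suc cen[of g] by (simp add: m_assoc) (metis Ec m_assoc nat_pow_closed xc)
qed

lemma invD: assumes "left_divides G M d x" shows "E 1 \<otimes> inv d \<in> M"
proof -
  obtain c where d: "d \<in> M" and c: "c \<in> M" and dc: "d \<otimes> c = x" using assms unfolding left_divides_def by blast
  obtain b where ab: "a = Suc b" using a1 by (cases a) auto
  have id: "inv d = c \<otimes> inv x" using dc d c by (metis Mc inv_solve_left m_assoc r_inv inv_closed xc r_one)
  have "E 1 \<otimes> inv d = inv d \<otimes> E 1" using Ecen[of "inv d"] d by simp
  also have "\<dots> = c \<otimes> inv x \<otimes> (x \<otimes> x [^] b)" using id E1 ab nat_pow_Suc2 by simp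
  also have "\<dots> = c \<otimes> x [^] b" using c by (simp add: m_assoc)
  finally show ?thesis using c by simp
qed

lemma invM: assumes "m \<in> M" shows "\<exists>k. E k \<otimes> inv m \<in> M"
proof -
  obtain ds where ds: "set ds \<subseteq> {u. left_divides G M u x}" and m: "foldr (\<otimes>) ds \<one> = m"
    using gen_elem assms by blast
  have "\<exists>k. E k \<otimes> inv (foldr (\<otimes>) ds \<one>) \<in> M" using ds
  proof (induct ds)
    case Nil then show ?case by (intro exI[of _ 0]) simp
  next
    case (Cons d ds)
    have dM: "d \<in> M" using Cons.prems unfolding left_divides_def by auto
    have fM: "foldr (\<otimes>) ds \<one> \<in> M" using foldrM divsM Cons.prems by simp
    obtain k where k: "E k \<otimes> inv (foldr (\<otimes>) ds \<one>) \<in> M" using Cons by auto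
    have "E (k + 1) \<otimes> inv (foldr (\<otimes>) (d#ds) \<one>)
        = E k \<otimes> (E 1 \<otimes> (inv (foldr (\<otimes>) ds \<one>) \<otimes> inv d))"
      using dM fM E_add[of k 1] by (simp only: foldr.simps o_apply) (simp add: m_assoc inv_mult_group)
    also have "\<dots> = (E k \<otimes> inv (foldr (\<otimes>) ds \<one>)) \<otimes> (E 1 \<otimes> inv d)"
      using dM fM Ecen[of "inv (foldr (\<otimes>) ds \<one>)" 1] by (simp add: m_assoc[symmetric])
    also have "\<dots> \<in> M" using k invD[of d] Cons.prems by simp
    finally show ?case by blast
  qed
  then show ?thesis using m by simp
qed

lemma allpos: assumes "g \<in> carrier G" shows "\<exists>k. E k \<otimes> g \<in> M"
proof -
  have gen: "generate G M = carrier G" using gs unfolding garside_structure_def by blast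
  have "g \<in> generate G M" using assms gen by simp
  then have "g \<in> carrier G \<and> (\<exists>k. E k \<otimes> g \<in> M)"
  proof (induct rule: generate.induct)
    case one then show ?case by (intro conjI exI[of _ 0]) simp_all
  next
    case (incl h) then show ?case by (intro conjI exI[of _ 0]) simp_all
  next
    case (inv h) then show ?case using invM by simp
  next
    case (eng h1 h2)
    then obtain k j where k: "E k \<otimes> h1 \<in> M" and j: "E j \<otimes> h2 \<in> M" and c: "h1 \<in> carrier G" "h2 \<in> carrier G" by blast
    have "E (k + j) \<otimes> (h1 \<otimes> h2) = (E k \<otimes> h1) \<otimes> (E j \<otimes> h2)"
      using c Ecen[of h1 j] by (simp add: E_add m_assoc) (metis Ec m_assoc)
    also have "\<dots> \<in> M" using k j by simp
    finally show ?case using c by blast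
  qed
  then show ?thesis by blast
qed

definition gle :: "'a \<Rightarrow> 'a \<Rightarrow> bool" where
  "gle g h \<longleftrightarrow> g \<in> carrier G \<and> h \<in> carrier G \<and> inv g \<otimes> h \<in> M"

lemma gle_refl: "g \<in> carrier G \<Longrightarrow> gle g g" by (simp add: gle_def)

lemma gle_trans: "gle g h \<Longrightarrow> gle h k \<Longrightarrow> gle g k"
proof -
  assume 1: "gle g h" and 2: "gle h k"
  then have c: "g \<in> carrier G" "h \<in> carrier G" "k \<in> carrier G" by (auto simp: gle_def)
  have "(inv g \<otimes> h) \<otimes> (inv h \<otimes> k) = inv g \<otimes> k" using c by (simp add: m_assoc)
  moreover have "(inv g \<otimes> h) \<otimes> (inv h \<otimes> k) \<in> M" using 1 2 by (simp add: gle_def)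
  ultimately show ?thesis using c by (simp add: gle_def)
qed

lemma gle_antisym: "gle g h \<Longrightarrow> gle h g \<Longrightarrow> g = h"
proof -
  assume 1: "gle g h" and 2: "gle h g"
  then have c: "g \<in> carrier G" "h \<in> carrier G" by (auto simp: gle_def)
  have "(inv g \<otimes> h) \<otimes> (inv h \<otimes> g) = \<one>" using c by (simp add: m_assoc)
  moreover have "inv g \<otimes> h \<in> M" "inv h \<otimes> g \<in> M" using 1 2 by (auto simp: gle_def)
  ultimately have "inv g \<otimes> h = \<one>" using unit[of "inv g \<otimes> h" "inv h \<otimes> g"] by blast
  then have "g \<otimes> (inv g \<otimes> h) = g" using c by simp
  then show ?thesis using c by simp
qed

lemma meetM: assumes "u \<in> M" "v \<in> M"
  shows "\<exists>m\<in>M. inv m \<otimes> u \<in> M \<and> inv m \<otimes> v \<in> M \<and> (\<forall>w\<in>M. inv w \<otimes> u \<in> M \<and> inv w \<otimes> v \<in> M \<longrightarrow> inv w \<otimes> m \<in> M)"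
proof -
  have "is_lattice_on M (left_divides G M)" using gs unfolding garside_structure_def garside_monoid_def by blast
  then have L: "\<forall>u\<in>M. \<forall>v\<in>M.
        (\<exists>j\<in>M. left_divides G M u j \<and> left_divides G M v j \<and> (\<forall>z\<in>M. left_divides G M u z \<and> left_divides G M v z \<longrightarrow> left_divides G M j z)) \<and>
        (\<exists>m\<in>M. left_divides G M m u \<and> left_divides G M m v \<and> (\<forall>z\<in>M. left_divides G M z u \<and> left_divides G M z v \<longrightarrow> left_divides G M z m))"
    unfolding is_lattice_on_def by (rule conjunct2[THEN conjunct2[THEN conjunct2]])
  have "\<exists>m\<in>M. left_divides G M m u \<and> left_divides G M m v \<and> (\<forall>z\<in>M. left_divides G M z u \<and> left_divides G M z v \<longrightarrow> left_divides G M z m)"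
    using bspec[OF bspec[OF L assms(1)] assms(2)] by (rule conjunct2)
  then obtain m where m: "m \<in> M" "left_divides G M m u" "left_divides G M m v"
     "\<forall>w\<in>M. left_divides G M w u \<and> left_divides G M w v \<longrightarrow> left_divides G M w m"
    by blast
  have 1: "inv m \<otimes> u \<in> M" using ld_iff[OF m(1) assms(1)] m(2) by blast
  have 2: "inv m \<otimes> v \<in> M" using ld_iff[OF m(1) assms(2)] m(3) by blast
  have 3: "\<forall>w\<in>M. inv w \<otimes> u \<in> M \<and> inv w \<otimes> v \<in> M \<longrightarrow> inv w \<otimes> m \<in> M"
  proof (intro ballI impI)
    fix w assume w: "w \<in> M" and h: "inv w \<otimes> u \<in> M \<and> inv w \<otimes> v \<in> M"
    have "left_divides G M w u" using ld_iff[OF w assms(1)] h by blast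
    moreover have "left_divides G M w v" using ld_iff[OF w assms(2)] h by blast
    ultimately have "left_divides G M w m" using m(4) w by blast
    then show "inv w \<otimes> m \<in> M" using ld_iff[OF w m(1)] by blast
  qed
  show ?thesis using 1 2 3 m(1) by blast
qed

lemma glb2: assumes g1: "g1 \<in> carrier G" and g2: "g2 \<in> carrier G"
  shows "\<exists>m. gle m g1 \<and> gle m g2 \<and> (\<forall>p. gle p g1 \<and> gle p g2 \<longrightarrow> gle p m)"
proof -
  obtain k1 where k1: "E k1 \<otimes> g1 \<in> M" using allpos g1 by blast
  obtain k2 where k2: "E k2 \<otimes> g2 \<in> M" using allpos g2 by blast
  define K where "K = k2 + k1"
  have u: "E K \<otimes> g1 \<in> M"
  proof -
    have "E K \<otimes> g1 = E k2 \<otimes> (E k1 \<otimes> g1)" using g1 by (simp add: K_def E_add m_assoc)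
    then show ?thesis using k1 by simp
  qed
  have v: "E K \<otimes> g2 \<in> M"
  proof -
    have "E K \<otimes> g2 = E k1 \<otimes> (E k2 \<otimes> g2)" using g2 by (simp add: K_def add.commute[of k2 k1] E_add m_assoc)
    then show ?thesis using k2 by simp
  qed
  obtain mm where mm: "mm \<in> M" "inv mm \<otimes> (E K \<otimes> g1) \<in> M" "inv mm \<otimes> (E K \<otimes> g2) \<in> M"
    "\<forall>w\<in>M. inv w \<otimes> (E K \<otimes> g1) \<in> M \<and> inv w \<otimes> (E K \<otimes> g2) \<in> M \<longrightarrow> inv w \<otimes> mm \<in> M"
    using meetM[OF u v] by blast
  define m where "m = inv (E K) \<otimes> mm"
  have mc: "m \<in> carrier G" using mm by (simp add: m_def)
  have im: "inv m = inv mm \<otimes> E K" using mm by (simp add: m_def inv_mult_group)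
  have "gle m g1" using mm g1 mc by (simp add: gle_def im m_assoc)
  moreover have "gle m g2" using mm g2 mc by (simp add: gle_def im m_assoc)
  moreover have "\<forall>p. gle p g1 \<and> gle p g2 \<longrightarrow> gle p m"
  proof (intro allI impI)
    fix p assume pp: "gle p g1 \<and> gle p g2"
    then have pc: "p \<in> carrier G" and p1: "inv p \<otimes> g1 \<in> M" and p2: "inv p \<otimes> g2 \<in> M" by (auto simp: gle_def)
    obtain j where j: "E j \<otimes> (E K \<otimes> p) \<in> M" using allpos[of "E K \<otimes> p"] pc by auto
    define P where "P = E j \<otimes> (E K \<otimes> p)"
    have iP: "inv P = inv p \<otimes> (inv (E K) \<otimes> inv (E j))" using pc by (simp add: P_def inv_mult_group m_assoc)
    have u': "E j \<otimes> (E K \<otimes> g1) \<in> M" using u by simp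
    have v': "E j \<otimes> (E K \<otimes> g2) \<in> M" using v by simp
    obtain mm' where mm': "mm' \<in> M" "inv mm' \<otimes> (E j \<otimes> (E K \<otimes> g1)) \<in> M" "inv mm' \<otimes> (E j \<otimes> (E K \<otimes> g2)) \<in> M"
      "\<forall>w\<in>M. inv w \<otimes> (E j \<otimes> (E K \<otimes> g1)) \<in> M \<and> inv w \<otimes> (E j \<otimes> (E K \<otimes> g2)) \<in> M \<longrightarrow> inv w \<otimes> mm' \<in> M"
      using meetM[OF u' v'] by blast
    have "inv P \<otimes> (E j \<otimes> (E K \<otimes> g1)) = inv p \<otimes> g1" using pc g1 by (simp add: iP m_assoc)
    moreover have "inv P \<otimes> (E j \<otimes> (E K \<otimes> g2)) = inv p \<otimes> g2" using pc g2 by (simp add: iP m_assoc)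
    ultimately have Pmm': "inv P \<otimes> mm' \<in> M" using mm'(4) j p1 p2 by (simp add: P_def[symmetric])
    have "inv (E j) \<otimes> mm' \<in> M" using mm'(4) u v by simp
    define r where "r = inv (E j) \<otimes> mm'"
    have rM: "r \<in> M" using \<open>inv (E j) \<otimes> mm' \<in> M\<close> by (simp add: r_def)
    have ir: "inv r = inv mm' \<otimes> E j" using mm' by (simp add: r_def inv_mult_group)
    have "inv r \<otimes> (E K \<otimes> g1) \<in> M" using mm' g1 by (simp add: ir m_assoc)
    moreover have "inv r \<otimes> (E K \<otimes> g2) \<in> M" using mm' g2 by (simp add: ir m_assoc)
    ultimately have rmm: "inv r \<otimes> mm \<in> M" using mm(4) rM by blast
    have "(inv P \<otimes> mm') \<otimes> (inv r \<otimes> mm) = inv p \<otimes> m"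
      using pc mm mm' by (simp add: iP ir m_def m_assoc)
    moreover have "(inv P \<otimes> mm') \<otimes> (inv r \<otimes> mm) \<in> M" using Pmm' rmm by simp
    ultimately show "gle p m" using pc mc by (simp add: gle_def)
  qed
  ultimately show ?thesis by blast
qed

lemma glbL: "set qs \<subseteq> carrier G \<Longrightarrow> qs \<noteq> [] \<Longrightarrow>
   \<exists>h. (\<forall>q\<in>set qs. gle h q) \<and> (\<forall>p. (\<forall>q\<in>set qs. gle p q) \<longrightarrow> gle p h)"
proof (induct qs)
  case Nil then show ?case by simp
next
  case (Cons q qs)
  show ?case
  proof (cases "qs = []")
    case True then show ?thesis using Cons gle_refl by auto
  next
    case False
    then obtain h where h: "\<forall>q\<in>set qs. gle h q" "\<forall>p. (\<forall>q\<in>set qs. gle p q) \<longrightarrow> gle p h"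
      using Cons by auto
    have hc: "h \<in> carrier G" using h(1) False by (cases qs) (auto simp: gle_def)
    obtain m where m: "gle m q" "gle m h" "\<forall>p. gle p q \<and> gle p h \<longrightarrow> gle p m"
      using glb2[of q h] hc Cons.prems by auto
    have A: "\<forall>q'\<in>set (q#qs). gle m q'"
    proof
      fix q' assume "q' \<in> set (q#qs)"
      then show "gle m q'"
      proof (cases "q' = q")
        case True then show ?thesis using m(1) by simp
      next
        case False then have "q' \<in> set qs" using \<open>q' \<in> set (q#qs)\<close> by simp
        then show ?thesis using m(2) h(1) gle_trans by blast
      qed
    qed
    have B: "\<forall>p. (\<forall>q'\<in>set (q#qs). gle p q') \<longrightarrow> gle p m"
    proof (intro allI impI)
      fix p assume p: "\<forall>q'\<in>set (q#qs). gle p q'"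
      then have "gle p q" by simp
      moreover have "gle p h" using h(2) p by simp
      ultimately show "gle p m" using m(3) by blast
    qed
    show ?thesis using A B by blast
  qed
qed

lemma conj_thm:
  assumes y: "y \<in> carrier G" and pw: "y [^] a = x [^] a"
  shows "\<exists>h\<in>carrier G. h \<otimes> x \<otimes> inv h = y"
proof -
  define U where "U g = inv y \<otimes> g \<otimes> x" for g
  define qs where "qs = map (\<lambda>i. y [^] i \<otimes> inv (x [^] i)) [0..<a]"
  have qsc: "set qs \<subseteq> carrier G" using y by (auto simp: qs_def)
  have qsne: "qs \<noteq> []" using a1 by (simp add: qs_def)
  obtain h where h1: "\<forall>q\<in>set qs. gle h q" and h2: "\<forall>p. (\<forall>q\<in>set qs. gle p q) \<longrightarrow> gle p h"
    using glbL[OF qsc qsne] by blast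
  have hc: "h \<in> carrier G" using h1 qsne by (cases qs) (auto simp: gle_def)
  have Uc: "\<And>g. g \<in> carrier G \<Longrightarrow> U g \<in> carrier G" using y by (simp add: U_def)
  have Umono: "\<And>g g'. gle g g' \<Longrightarrow> gle (U g) (U g')"
  proof -
    fix g g' assume l: "gle g g'"
    then have c: "g \<in> carrier G" "g' \<in> carrier G" and m: "inv g \<otimes> g' \<in> M" by (auto simp: gle_def)
    have "inv (U g) \<otimes> U g' = inv x \<otimes> (inv g \<otimes> g') \<otimes> x" using c y by (simp add: U_def inv_mult_group m_assoc)
    then show "gle (U g) (U g')" using sigM[OF m] c Uc by (simp add: gle_def)
  qed
  have Qclosed: "\<forall>q\<in>set qs. \<exists>q'\<in>set qs. q = U q'"
  proof
    fix q assume "q \<in> set qs"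
    then obtain i where i: "i < a" "q = y [^] i \<otimes> inv (x [^] i)" by (auto simp: qs_def)
    show "\<exists>q'\<in>set qs. q = U q'"
    proof (cases "Suc i < a")
      case True
      have s1: "y [^] Suc i = y \<otimes> y [^] i" using y by (rule nat_pow_Suc2)
      have s2: "x [^] Suc i = x \<otimes> x [^] i" by (rule nat_pow_Suc2) simp
      have "U (y [^] Suc i \<otimes> inv (x [^] Suc i)) = q"
        unfolding s1 s2 using y i by (simp add: U_def inv_mult_group m_assoc)
      moreover have "y [^] Suc i \<otimes> inv (x [^] Suc i) \<in> set qs"
        unfolding qs_def set_map by (rule image_eqI[where x="Suc i"]) (simp_all add: True)
      ultimately show ?thesis by metis
    next
      case False
      then have ai: "a = Suc i" using i by simp
      have e: "y \<otimes> y [^] i = x \<otimes> x [^] i" using pw ai nat_pow_Suc2[OF y, of i] nat_pow_Suc2[OF xc, of i] by simp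
      have "q = inv y \<otimes> (y \<otimes> y [^] i) \<otimes> inv (x [^] i)" using i y by (simp add: m_assoc)
      also have "\<dots> = inv y \<otimes> x" using e y by (simp add: m_assoc)
      also have "\<dots> = U \<one>" using y by (simp add: U_def)
      finally have "q = U \<one>" .
      moreover have "\<one> \<in> set qs"
        unfolding qs_def set_map by (rule image_eqI[where x=0]) (use a1 in auto)
      ultimately show ?thesis by blast
    qed
  qed
  have Ule: "gle (U h) h"
  proof -
    have "\<forall>q\<in>set qs. gle (U h) q"
    proof
      fix q assume "q \<in> set qs"
      then obtain q' where "q' \<in> set qs" "q = U q'" using Qclosed by blast
      then show "gle (U h) q" using h1 Umono by blast
    qed
    then show ?thesis using h2 by blast
  qed
  have Ucar: "\<And>n. (U ^^ n) h \<in> carrier G"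
  proof -
    fix n show "(U ^^ n) h \<in> carrier G" by (induct n) (auto simp: hc Uc)
  qed
  have Upow: "\<And>n. (U ^^ n) h = inv (y [^] n) \<otimes> h \<otimes> x [^] n"
  proof -
    fix n show "(U ^^ n) h = inv (y [^] n) \<otimes> h \<otimes> x [^] n"
      by (induct n) (simp_all add: hc y U_def inv_mult_group m_assoc)
  qed
  have Ua: "(U ^^ a) h = h"
  proof -
    have "(U ^^ a) h = inv (x [^] a) \<otimes> (h \<otimes> x [^] a)" using Upow pw hc by (simp add: m_assoc)
    also have "\<dots> = h" using cen[OF hc, symmetric] hc by simp
    finally show ?thesis .
  qed
  have chain: "\<And>n. gle ((U ^^ Suc n) h) ((U ^^ n) h)"
  proof -
    fix n show "gle ((U ^^ Suc n) h) ((U ^^ n) h)"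
      by (induct n) (simp_all add: Ule Umono)
  qed
  have chain2: "\<And>n. gle ((U ^^ Suc n) h) (U h)"
  proof -
    fix n show "gle ((U ^^ Suc n) h) (U h)"
    proof (induct n)
      case 0 then show ?case using gle_refl Uc hc by simp
    next
      case (Suc n) then show ?case using chain[of "Suc n"] gle_trans by blast
    qed
  qed
  obtain b where ab: "a = Suc b" using a1 by (cases a) auto
  have "gle h (U h)" using chain2[of b] Ua ab by simp
  then have Uh: "U h = h" using Ule gle_antisym by blast
  have "y \<otimes> h = h \<otimes> x"
  proof -
    have "y \<otimes> h = y \<otimes> (inv y \<otimes> h \<otimes> x)" using Uh by (simp add: U_def)
    also have "\<dots> = h \<otimes> x" using y hc by (simp add: m_assoc)
    finally show ?thesis .
  qed
  then have "h \<otimes> x \<otimes> inv h = y" using y hc by (metis inv_closed m_assoc m_closed r_inv r_one xc)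
  then show ?thesis using hc by blast
qed

end


lemma xy_cen:
  assumes "a \<ge> 1" and g: "g \<in> carrier (xy_group a)"
  shows "gen_x a [^]\<^bsub>xy_group a\<^esub> a \<otimes>\<^bsub>xy_group a\<^esub> g = g \<otimes>\<^bsub>xy_group a\<^esub> gen_x a [^]\<^bsub>xy_group a\<^esub> a"
proof -
  obtain w where w: "g = pres_rel a``{w}" using g xy_carrier_E by blast
  show ?thesis unfolding w gen_x_def xy_pow xy_mult class_eq using xa_comm[OF assms(1)] .
qed

lemma xy_pw: "gen_y a [^]\<^bsub>xy_group a\<^esub> a = gen_x a [^]\<^bsub>xy_group a\<^esub> a"
  unfolding gen_x_def gen_y_def xy_pow class_eq by (rule pres_rel.sym, rule pres_rel.relator)

theorem mainTheorem7:
  fixes a :: nat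
  assumes "a \<ge> 2"
  shows "(\<not> (\<exists>g \<in> carrier (xy_group a).
             g \<otimes>\<^bsub>xy_group a\<^esub> gen_x a \<otimes>\<^bsub>xy_group a\<^esub> inv\<^bsub>xy_group a\<^esub> g = gen_y a))
       \<and> (\<not> (\<exists>M. garside_structure (xy_group a) M (gen_x a)))"
proof
  show P1: "\<not> (\<exists>g \<in> carrier (xy_group a).
             g \<otimes>\<^bsub>xy_group a\<^esub> gen_x a \<otimes>\<^bsub>xy_group a\<^esub> inv\<^bsub>xy_group a\<^esub> g = gen_y a)"
    by (rule part1[OF assms])
  show "\<not> (\<exists>M. garside_structure (xy_group a) M (gen_x a))"
  proof
    assume "\<exists>M. garside_structure (xy_group a) M (gen_x a)"
    then obtain M where gs: "garside_structure (xy_group a) M (gen_x a)" by blast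
    have a1: "1 \<le> a" using assms by simp
    have gr: "gar (xy_group a) M (gen_x a) a"
      unfolding gar_def gar_axioms_def using xy_group gs a1 xy_cen[OF a1] by blast
    have yc: "gen_y a \<in> carrier (xy_group a)" unfolding gen_y_def by (rule xy_carrier_I)
    obtain h where "h \<in> carrier (xy_group a)"
      "h \<otimes>\<^bsub>xy_group a\<^esub> gen_x a \<otimes>\<^bsub>xy_group a\<^esub> inv\<^bsub>xy_group a\<^esub> h = gen_y a"
      using gar.conj_thm[OF gr yc xy_pw] by blast
    then show False using P1 by blast
  qed
qed

end
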